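(* Let $X$ be a real Hilbert space, let $\alpha\in\mathbb{R}\setminus\{0\}$ and $\beta>0$, equip $X\times X\times\mathbb{R}$ with the norm $\|(x,y,\gamma)\|=\sqrt{\|x\|^2+\|y\|^2+\beta^2|\gamma|^2}$, and let $$C_\alpha=\{(x,y,\gamma)\in X\times X\times\mathbb{R} : \langle x,y\rangle=\alpha\gamma\}.$$ Let $(x_0,y_0,\gamma_0)\in X\times X\times\mathbb{R}$. Then: (i) If $x_0\neq y_0$ and $x_0\neq -y_0$, then $$P_{C_\alpha}(x_0,y_0,\gamma_0)=\Big\{\Big(\frac{x_0-\lambda y_0}{1-\lambda^2},\frac{y_0-\lambda x_0}{1-\lambda^2},\gamma_0+\frac{\lambda\alpha}{\beta^2}\Big)\Big\}$$ for the unique $\lambda\in]-1,1[$ solving $g(\lambda):=\frac{(\lambda^2+1)p-2\lambda q}{(1-\lambda^2)^2}-\frac{2\lambda\alpha^2}{\beta^2}-2\alpha\gamma_0=0$, where $p:=2\langle x_0,y_0\rangle$ and $q:=\|x_0\|^2+\|y_0\|^2$. (ii) If $y_0=-x_0\neq 0$: (a) when $\alpha(\gamma_0-\frac{\alpha}{\beta^2})<-\frac{\|x_0\|^2}{4}$, then $P_{C_\alpha}(x_0,-x_0,\gamma_0)=\{(\frac{x_0}{1-\lambda},\frac{-x_0}{1-\lambda},\gamma_0+\frac{\lambda\alpha}{\beta^2})\}$ for the unique $\lambda\in]-1,1[$ solving $g_1(\lambda):=\frac{2\|x_0\|^2}{(1-\lambda)^2}+\frac{2\lambda\alpha^2}{\beta^2}+2\alpha\gamma_0=0$;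 (b) when $\alpha(\gamma_0-\frac{\alpha}{\beta^2})\geq-\frac{\|x_0\|^2}{4}$, then $$P_{C_\alpha}(x_0,-x_0,\gamma_0)=\Big\{\Big(\frac{x_0}{2}+\frac{u}{\sqrt2},-\frac{x_0}{2}+\frac{u}{\sqrt2},\gamma_0-\frac{\alpha}{\beta^2}\Big): u\in X,\ \|u\|=\sqrt{2\alpha\big(\gamma_0-\tfrac{\alpha}{\beta^2}\big)+\tfrac{\|x_0\|^2}{2}}\Big\},$$ which is a singleton if and only if $\alpha(\gamma_0-\frac{\alpha}{\beta^2})=-\frac{\|x_0\|^2}{4}$. (iii) If $y_0=x_0\neq 0$: (a) when $\alpha(\gamma_0+\frac{\alpha}{\beta^2})>\frac{\|x_0\|^2}{4}$, then $P_{C_\alpha}(x_0,x_0,\gamma_0)=\{(\frac{x_0}{1+\lambda},\frac{x_0}{1+\lambda},\gamma_0+\frac{\lambda\alpha}{\beta^2})\}$ for the unique $\lambda\in]-1,1[$ solving $g_2(\lambda):=\frac{2\|x_0\|^2}{(1+\lambda)^2}-\frac{2\lambda\alpha^2}{\beta^2}-2\alpha\gamma_0=0$; (b) when $\alpha(\gamma_0+\frac{\alpha}{\beta^2})\leq\frac{\|x_0\|^2}{4}$, then $$P_{C_\alpha}(x_0,x_0,\gamma_0)=\Big\{\Big(\frac{x_0}{2}-\frac{v}{\sqrt2},\frac{x_0}{2}+\frac{v}{\sqrt2},\gamma_0+\frac{\alpha}{\beta^2}\Big): v\in X,\ \|v\|=\sqrt{-2\alpha\big(\gamma_0+\tfrac{\alpha}{\beta^2}\big)+\tfrac{\|x_0\|^2}{2}}\Big\},$$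 which is a singleton if and only if $\alpha(\gamma_0+\frac{\alpha}{\beta^2})=\frac{\|x_0\|^2}{4}$. (iv) If $x_0=y_0=0$: (a) when $\alpha\gamma_0>\frac{\alpha^2}{\beta^2}$, $P_{C_\alpha}(0,0,\gamma_0)$ is the non-singleton set $\{(\frac{u}{\sqrt2},\frac{u}{\sqrt2},\gamma_0-\frac{\alpha}{\beta^2}): u\in X,\ \|u\|=\sqrt{2\alpha(\gamma_0-\frac{\alpha}{\beta^2})}\}$; (b) when $|\alpha\gamma_0|\leq\frac{\alpha^2}{\beta^2}$, $P_{C_\alpha}(0,0,\gamma_0)=\{(0,0,0)\}$; (c) when $\alpha\gamma_0<-\frac{\alpha^2}{\beta^2}$, $P_{C_\alpha}(0,0,\gamma_0)$ is the non-singleton set $\{(-\frac{v}{\sqrt2},\frac{v}{\sqrt2},\gamma_0+\frac{\alpha}{\beta^2}): v\in X,\ \|v\|=\sqrt{-2\alpha(\gamma_0+\frac{\alpha}{\beta^2})}\}$.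
   Context: For a nonempty set $S\subseteq X\times X\times\mathbb{R}$, the projection $P_S(z)$ is the set $\operatorname{argmin}_{w\in S}\|w-z\|$, where the norm is the $\beta$-weighted norm $\|(x,y,\gamma)\|=\sqrt{\|x\|^2+\|y\|^2+\beta^2|\gamma|^2}$. *)

theory Defs
  imports "HOL-Analysis.Analysis"
begin

definition wnorm :: "real \<Rightarrow> ('a::real_inner \<times> 'a \<times> real) \<Rightarrow> real" where
  "wnorm \<beta> w = (case w of (x, y, \<gamma>) \<Rightarrow> sqrt (norm x ^ 2 + norm y ^ 2 + \<beta>^2 * \<bar>\<gamma>\<bar>^2))"

definition proj :: "real \<Rightarrow> ('a::real_inner \<times> 'a \<times> real) set \<Rightarrow> ('a \<times> 'a \<times> real) \<Rightarrow> ('a \<times> 'a \<times> real) set" where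
  "proj \<beta> S z = {w \<in> S. \<forall>w' \<in> S. wnorm \<beta> (w - z) \<le> wnorm \<beta> (w' - z)}"

definition Calpha :: "real \<Rightarrow> ('a::real_inner \<times> 'a \<times> real) set" where
  "Calpha \<alpha> = {(x, y, \<gamma>). inner x y = \<alpha> * \<gamma>}"

definition gfun :: "real \<Rightarrow> real \<Rightarrow> 'a::real_inner \<Rightarrow> 'a \<Rightarrow> real \<Rightarrow> real \<Rightarrow> real" where
  "gfun \<alpha> \<beta> x0 y0 \<gamma>0 t =
     (let p = 2 * inner x0 y0; q = norm x0 ^ 2 + norm y0 ^ 2 in
      ((t^2 + 1) * p - 2 * t * q) / (1 - t^2)^2 - 2 * t * \<alpha>^2 / \<beta>^2 - 2 * \<alpha> * \<gamma>0)"

definition g1fun :: "real \<Rightarrow> real \<Rightarrow> 'a::real_inner \<Rightarrow> real \<Rightarrow> real \<Rightarrow> real" where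
  "g1fun \<alpha> \<beta> x0 \<gamma>0 t = 2 * norm x0 ^ 2 / (1 - t)^2 + 2 * t * \<alpha>^2 / \<beta>^2 + 2 * \<alpha> * \<gamma>0"

definition g2fun :: "real \<Rightarrow> real \<Rightarrow> 'a::real_inner \<Rightarrow> real \<Rightarrow> real \<Rightarrow> real" where
  "g2fun \<alpha> \<beta> x0 \<gamma>0 t = 2 * norm x0 ^ 2 / (1 + t)^2 - 2 * t * \<alpha>^2 / \<beta>^2 - 2 * \<alpha> * \<gamma>0"

end

theory Submission
  imports Defs
begin

lemma ident:
  fixes x y xs ys x0 y0 :: "'a::real_inner"
  assumes "x0 = xs + t *\<^sub>R ys" "y0 = ys + t *\<^sub>R xs" "g0 = gs - t*\<alpha>/\<beta>^2" "\<beta> \<noteq> 0"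
  shows "norm (x-x0)^2 + norm (y-y0)^2 + \<beta>^2*(g-g0)^2 + 2*t*(inner x y - \<alpha>*g)
   = norm (xs-x0)^2 + norm (ys-y0)^2 + \<beta>^2*(gs-g0)^2 + 2*t*(inner xs ys - \<alpha>*gs)
     + (norm (x-xs)^2 + norm (y-ys)^2 + 2*t*inner (x-xs) (y-ys) + \<beta>^2*(g-gs)^2)"
proof -
  have e: "\<beta>^2*(g-g0)^2 = \<beta>^2*(g-gs)^2 + 2*t*\<alpha>*(g-gs) + t^2*\<alpha>^2/\<beta>^2"
       "\<beta>^2*(gs-g0)^2 = t^2*\<alpha>^2/\<beta>^2"
    using assms(4) unfolding assms(3) by (simp_all add: field_simps power2_eq_square)
  show ?thesis
    unfolding e unfolding assms(1,2) power2_norm_eq_inner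
    by (simp add: inner_diff_left inner_diff_right inner_add_left inner_add_right inner_commute algebra_simps)
qed

lemma Qlow:
  fixes a b :: "'a::real_inner"
  assumes "\<bar>t\<bar> \<le> 1"
  shows "(1 - \<bar>t\<bar>) * (norm a^2 + norm b^2) \<le> norm a^2 + norm b^2 + 2*t*inner a b"
proof -
  have cs: "\<bar>inner a b\<bar> \<le> norm a * norm b" by (rule Cauchy_Schwarz_ineq2)
  have am: "2 * (norm a * norm b) \<le> norm a^2 + norm b^2"
    using sum_squares_bound[of "norm a" "norm b"] by simp
  have "\<bar>t * inner a b\<bar> \<le> \<bar>t\<bar> * (norm a * norm b)"
    using cs by (simp add: abs_mult mult_left_mono)
  moreover have "\<bar>t\<bar> * (2 * (norm a * norm b)) \<le> \<bar>t\<bar> * (norm a^2 + norm b^2)"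
    using am by (simp add: mult_left_mono)
  ultimately have "2 * \<bar>t * inner a b\<bar> \<le> \<bar>t\<bar> * (norm a^2 + norm b^2)" by linarith
  thus ?thesis by (simp add: algebra_simps)
qed

lemma Qm1: fixes a b :: "'a::real_inner"
  shows "norm a^2 + norm b^2 + 2*(-1)*inner a b = norm (a - b)^2"
  by (simp add: power2_norm_eq_inner inner_diff_left inner_diff_right inner_commute)

lemma Qp1: fixes a b :: "'a::real_inner"
  shows "norm a^2 + norm b^2 + 2*1*inner a b = norm (a + b)^2"
  by (simp add: power2_norm_eq_inner inner_add_left inner_add_right inner_commute)

lemma Calpha_mem: "((x,y,g) \<in> Calpha \<alpha>) = (inner x y = \<alpha>*g)"
  by (simp add: Calpha_def)

lemma wnorm_eq: "wnorm \<beta> ((x,y,g) - (x0,y0,g0)) = sqrt (norm (x-x0)^2 + norm (y-y0)^2 + \<beta>^2*(g-g0)^2)"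
  by (simp add: wnorm_def)

lemma proj_char:
  fixes x0 y0 xs ys :: "'a::real_inner"
  assumes b: "\<beta> \<noteq> 0" and t: "\<bar>t\<bar> \<le> 1"
    and st: "x0 = xs + t *\<^sub>R ys" "y0 = ys + t *\<^sub>R xs" "g0 = gs - t*\<alpha>/\<beta>^2"
    and f: "inner xs ys = \<alpha>*gs"
  shows "proj \<beta> (Calpha \<alpha>) (x0,y0,g0) = {(x,y,g). inner x y = \<alpha>*g \<and>
     norm (x-xs)^2 + norm (y-ys)^2 + 2*t*inner (x-xs) (y-ys) + \<beta>^2*(g-gs)^2 = 0}"
proof -
  define D where "D x y g = norm (x-x0)^2 + norm (y-y0)^2 + \<beta>^2*(g-g0)^2" for x y g
  define Q where "Q x y g = norm (x-xs)^2 + norm (y-ys)^2 + 2*t*inner (x-xs) (y-ys) + \<beta>^2*(g-gs)^2" for x y g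
  have Q0: "Q x y g \<ge> 0" for x y g
  proof -
    have "0 \<le> (1 - \<bar>t\<bar>) * (norm (x-xs)^2 + norm (y-ys)^2)" using t by simp
    also have "\<dots> \<le> norm (x-xs)^2 + norm (y-ys)^2 + 2*t*inner (x-xs) (y-ys)" by (rule Qlow[OF t])
    finally show ?thesis unfolding Q_def by (simp add: add_nonneg_nonneg)
  qed
  have key: "inner x y = \<alpha>*g \<Longrightarrow> D x y g = D xs ys gs + Q x y g" for x y g
    using ident[OF st b, of x y g] f unfolding D_def Q_def by simp
  have W: "wnorm \<beta> ((x,y,g) - (x0,y0,g0)) = sqrt (D x y g)" for x y g
    by (simp add: wnorm_def D_def)
  have fs: "(xs,ys,gs) \<in> Calpha \<alpha>" using f by (simp add: Calpha_mem)
  show ?thesis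
  proof (rule set_eqI)
    fix w :: "'a \<times> 'a \<times> real"
    obtain x y g where w: "w = (x,y,g)" by (cases w)
    show "w \<in> proj \<beta> (Calpha \<alpha>) (x0,y0,g0) \<longleftrightarrow> w \<in> {(x,y,g). inner x y = \<alpha>*g \<and>
     norm (x-xs)^2 + norm (y-ys)^2 + 2*t*inner (x-xs) (y-ys) + \<beta>^2*(g-gs)^2 = 0}"
    proof
      assume "w \<in> proj \<beta> (Calpha \<alpha>) (x0,y0,g0)"
      hence c0: "w \<in> Calpha \<alpha>" and m: "\<forall>w'\<in>Calpha \<alpha>. wnorm \<beta> (w - (x0,y0,g0)) \<le> wnorm \<beta> (w' - (x0,y0,g0))"
        unfolding proj_def by auto
      from c0 have c: "inner x y = \<alpha>*g" unfolding w by (simp add: Calpha_mem)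
      from m fs have "wnorm \<beta> ((x,y,g) - (x0,y0,g0)) \<le> wnorm \<beta> ((xs,ys,gs) - (x0,y0,g0))" unfolding w by blast
      hence "sqrt (D x y g) \<le> sqrt (D xs ys gs)" unfolding W .
      hence "D x y g \<le> D xs ys gs" by simp
      with key[OF c] Q0[of x y g] have "Q x y g = 0" by linarith
      with c show "w \<in> {(x,y,g). inner x y = \<alpha>*g \<and>
     norm (x-xs)^2 + norm (y-ys)^2 + 2*t*inner (x-xs) (y-ys) + \<beta>^2*(g-gs)^2 = 0}"
        unfolding w Q_def by simp
    next
      assume "w \<in> {(x,y,g). inner x y = \<alpha>*g \<and>
     norm (x-xs)^2 + norm (y-ys)^2 + 2*t*inner (x-xs) (y-ys) + \<beta>^2*(g-gs)^2 = 0}"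
      hence c: "inner x y = \<alpha>*g" and q: "Q x y g = 0" unfolding w Q_def by auto
      have "wnorm \<beta> (w - (x0,y0,g0)) \<le> wnorm \<beta> (w' - (x0,y0,g0))" if "w' \<in> Calpha \<alpha>" for w'
      proof -
        obtain x' y' g' where w': "w' = (x',y',g')" by (cases w')
        have c': "inner x' y' = \<alpha>*g'" using that w' by (simp add: Calpha_mem)
        have "D x y g \<le> D x' y' g'" using key[OF c] key[OF c'] q Q0[of x' y' g'] by linarith
        thus ?thesis unfolding w' w W by simp
      qed
      moreover have "w \<in> Calpha \<alpha>" using c w by (simp add: Calpha_mem)
      ultimately show "w \<in> proj \<beta> (Calpha \<alpha>) (x0,y0,g0)" unfolding proj_def by blast
    qed
  qed
qed


lemma proj_strict:
  fixes x0 y0 xs ys :: "'a::real_inner"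
  assumes b: "\<beta> \<noteq> 0" and t: "\<bar>t\<bar> < 1"
    and st: "x0 = xs + t *\<^sub>R ys" "y0 = ys + t *\<^sub>R xs" "g0 = gs - t*\<alpha>/\<beta>^2"
    and f: "inner xs ys = \<alpha>*gs"
  shows "proj \<beta> (Calpha \<alpha>) (x0,y0,g0) = {(xs,ys,gs)}"
proof -
  have "(inner x y = \<alpha>*g \<and>
     norm (x-xs)^2 + norm (y-ys)^2 + 2*t*inner (x-xs) (y-ys) + \<beta>^2*(g-gs)^2 = 0)
     \<longleftrightarrow> (x = xs \<and> y = ys \<and> g = gs)" for x y g
  proof
    assume h: "inner x y = \<alpha>*g \<and>
     norm (x-xs)^2 + norm (y-ys)^2 + 2*t*inner (x-xs) (y-ys) + \<beta>^2*(g-gs)^2 = 0"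
    have l: "(1 - \<bar>t\<bar>) * (norm (x-xs)^2 + norm (y-ys)^2) \<le> norm (x-xs)^2 + norm (y-ys)^2 + 2*t*inner (x-xs) (y-ys)"
      using t by (intro Qlow) simp
    have p1: "0 \<le> (1 - \<bar>t\<bar>) * (norm (x-xs)^2 + norm (y-ys)^2)" using t by simp
    have p2: "0 \<le> \<beta>^2*(g-gs)^2" by simp
    have z1: "\<beta>^2*(g-gs)^2 = 0" and z2: "(1 - \<bar>t\<bar>) * (norm (x-xs)^2 + norm (y-ys)^2) = 0"
      using h l p1 p2 by linarith+
    from z1 b have "g = gs" by simp
    moreover from z2 t have "norm (x-xs)^2 + norm (y-ys)^2 = 0" by simp
    hence "norm (x-xs) = 0 \<and> norm (y-ys) = 0"
      using sum_power2_eq_zero_iff[of "norm (x-xs)" "norm (y-ys)"] by blast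
    ultimately show "x = xs \<and> y = ys \<and> g = gs" by simp
  next
    assume "x = xs \<and> y = ys \<and> g = gs"
    thus "inner x y = \<alpha>*g \<and>
     norm (x-xs)^2 + norm (y-ys)^2 + 2*t*inner (x-xs) (y-ys) + \<beta>^2*(g-gs)^2 = 0" using f by simp
  qed
  moreover have tl: "\<bar>t\<bar> \<le> 1" using t by simp
  ultimately show ?thesis unfolding proj_char[OF b tl st f] by auto
qed

lemma inner_minus_form:
  fixes x0 u :: "'a::real_inner"
  shows "inner ((1/2) *\<^sub>R x0 + (1 / sqrt 2) *\<^sub>R u) (- ((1/2) *\<^sub>R x0) + (1 / sqrt 2) *\<^sub>R u)
     = norm u^2/2 - norm x0^2/4"
proof -
  have c: "(1 / sqrt 2) * (1 / sqrt 2) = (1/2::real)" by (simp add: real_sqrt_mult[symmetric])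
  show ?thesis
    by (simp add: power2_norm_eq_inner inner_add_left inner_add_right inner_diff_left inner_diff_right inner_commute algebra_simps c)
qed

lemma inner_plus_form:
  fixes x0 u :: "'a::real_inner"
  shows "inner ((1/2) *\<^sub>R x0 - (1 / sqrt 2) *\<^sub>R u) ((1/2) *\<^sub>R x0 + (1 / sqrt 2) *\<^sub>R u)
     = norm x0^2/4 - norm u^2/2"
proof -
  have c: "(1 / sqrt 2) * (1 / sqrt 2) = (1/2::real)" by (simp add: real_sqrt_mult[symmetric])
  show ?thesis
    by (simp add: power2_norm_eq_inner inner_add_left inner_add_right inner_diff_left inner_diff_right inner_commute algebra_simps c)
qed

lemma exists_norm:
  assumes "\<exists>z::'a::real_normed_vector. z \<noteq> 0" "r \<ge> 0"
  shows "\<exists>u::'a. norm u = r"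
proof -
  obtain z :: 'a where "z \<noteq> 0" using assms(1) by blast
  hence "norm ((r / norm z) *\<^sub>R z) = r" using assms(2) by simp
  thus ?thesis by blast
qed


lemma arith1: "(2*A + B/2)/2 - B/4 = (A::real)" by (simp add: field_simps)

lemma sqrt2_inv: "(1 / sqrt 2) * sqrt 2 = (1::real)" by simp

lemma halfneg:
  fixes u :: "'a::real_vector"
  assumes "(1 / sqrt 2) *\<^sub>R u = (1 / sqrt 2) *\<^sub>R (-u)"
  shows "u = 0"
proof -
  have "u = -u" using assms by (rule scaleR_left_imp_eq[rotated]) simp
  hence "u + u = 0" by (simp only: eq_neg_iff_add_eq_0)
  hence "(2::real) *\<^sub>R u = 0" by (simp only: scaleR_2)
  thus ?thesis by simp
qed

lemma proj_minus:
  fixes x0 :: "'a::real_inner"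
  assumes nontriv: "\<exists>z::'a. z \<noteq> 0" and b: "\<beta> \<noteq> 0"
    and h: "\<alpha>*(g0 - \<alpha>/\<beta>^2) \<ge> -(norm x0^2/4)"
  shows "proj \<beta> (Calpha \<alpha>) (x0, -x0, g0) =
      {((1/2) *\<^sub>R x0 + (1 / sqrt 2) *\<^sub>R u, - ((1/2) *\<^sub>R x0) + (1 / sqrt 2) *\<^sub>R u, g0 - \<alpha> / \<beta>^2)
             | u. norm u = sqrt (2 * \<alpha> * (g0 - \<alpha> / \<beta>^2) + norm x0 ^ 2 / 2)} \<and>
    ((\<exists>w. proj \<beta> (Calpha \<alpha>) (x0, - x0, g0) = {w}) \<longleftrightarrow> \<alpha> * (g0 - \<alpha> / \<beta>^2) = - (norm x0 ^ 2 / 4))"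
proof -
  define R where "R = 2 * \<alpha> * (g0 - \<alpha> / \<beta>^2) + norm x0 ^ 2 / 2"
  define r where "r = sqrt R"
  have R0: "R \<ge> 0" using h unfolding R_def by simp
  have r0: "r \<ge> 0" and r2: "r^2 = R" using R0 unfolding r_def by simp_all
  obtain u0 :: 'a where u0: "norm u0 = r" using exists_norm[OF nontriv r0] by blast
  define c :: real where "c = 1 / sqrt 2"
  define xs where "xs = (1/2) *\<^sub>R x0 + c *\<^sub>R u0"
  define ys where "ys = - ((1/2) *\<^sub>R x0) + c *\<^sub>R u0"
  define gs where "gs = g0 - \<alpha>/\<beta>^2"
  have half: "(1/2) *\<^sub>R x0 + (1/2) *\<^sub>R x0 = x0" for x0 :: 'a
    by (simp add: scaleR_left_distrib[symmetric])
  have st1: "x0 = xs + (-1) *\<^sub>R ys" unfolding xs_def ys_def using half[of x0] by (simp add: algebra_simps)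
  have st2: "-x0 = ys + (-1) *\<^sub>R xs" unfolding xs_def ys_def using half[of x0] by (simp add: algebra_simps)
  have st3: "g0 = gs - (-1)*\<alpha>/\<beta>^2" unfolding gs_def by simp
  have f: "inner xs ys = \<alpha>*gs"
    unfolding xs_def ys_def c_def inner_minus_form u0 r2 R_def gs_def by (simp only: mult.assoc arith1)
  have tl: "\<bar>-1::real\<bar> \<le> 1" by simp
  have PC: "proj \<beta> (Calpha \<alpha>) (x0, -x0, g0) = {(x,y,g). inner x y = \<alpha>*g \<and>
     norm ((x-xs) - (y-ys))^2 + \<beta>^2*(g-gs)^2 = 0}"
    unfolding proj_char[OF b tl st1 st2 st3 f] Qm1 ..
  define S where "S = {((1/2) *\<^sub>R x0 + (1 / sqrt 2) *\<^sub>R u, - ((1/2) *\<^sub>R x0) + (1 / sqrt 2) *\<^sub>R u, g0 - \<alpha> / \<beta>^2)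
             | u. norm u = sqrt (2 * \<alpha> * (g0 - \<alpha> / \<beta>^2) + norm x0 ^ 2 / 2)}"
  have PS: "proj \<beta> (Calpha \<alpha>) (x0, -x0, g0) = S"
  proof (rule set_eqI)
    fix w :: "'a \<times> 'a \<times> real"
    obtain x y g where w: "w = (x,y,g)" by (cases w)
    show "w \<in> proj \<beta> (Calpha \<alpha>) (x0, -x0, g0) \<longleftrightarrow> w \<in> S"
    proof
      assume "w \<in> proj \<beta> (Calpha \<alpha>) (x0, -x0, g0)"
      hence c1: "inner x y = \<alpha>*g" and z: "norm ((x-xs) - (y-ys))^2 + \<beta>^2*(g-gs)^2 = 0"
        unfolding PC w by auto
      have nn1: "0 \<le> norm ((x-xs) - (y-ys))^2" and nn2: "0 \<le> \<beta>^2*(g-gs)^2" by simp_all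
      have z1: "norm ((x-xs) - (y-ys))^2 = 0" and z2: "\<beta>^2*(g-gs)^2 = 0"
        using z nn1 nn2 by linarith+
      from z2 b have gg: "g = gs" by simp
      from z1 have "x - xs = y - ys" by simp
      hence yy: "y = (x - xs) + ys" by (metis diff_add_cancel)
      have x0e: "x0 = xs - ys" using st1 by simp
      have yx: "y = x - x0" unfolding x0e using yy by (simp add: algebra_simps)
      define u where "u = sqrt 2 *\<^sub>R (x - (1/2) *\<^sub>R x0)"
      have xu: "x = (1/2) *\<^sub>R x0 + (1 / sqrt 2) *\<^sub>R u" unfolding u_def by simp
      have yu: "y = - ((1/2) *\<^sub>R x0) + (1 / sqrt 2) *\<^sub>R u" unfolding yx
        using xu half[of x0] by (simp add: algebra_simps)
      have "norm u^2/2 - norm x0^2/4 = \<alpha>*gs" using c1 gg unfolding xu yu inner_minus_form by simp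
      hence "norm u^2 = R" unfolding R_def gs_def by simp
      hence "norm u = sqrt R" by (metis norm_ge_zero real_sqrt_unique)
      thus "w \<in> S" unfolding S_def R_def[symmetric] w xu yu gg gs_def by blast
    next
      assume "w \<in> S"
      then obtain u where nu: "norm u = r" and wu: "w = ((1/2) *\<^sub>R x0 + (1 / sqrt 2) *\<^sub>R u, - ((1/2) *\<^sub>R x0) + (1 / sqrt 2) *\<^sub>R u, g0 - \<alpha> / \<beta>^2)"
        unfolding S_def R_def[symmetric] r_def[symmetric] by blast
      have "inner ((1/2) *\<^sub>R x0 + (1 / sqrt 2) *\<^sub>R u) (- ((1/2) *\<^sub>R x0) + (1 / sqrt 2) *\<^sub>R u) = \<alpha> * (g0 - \<alpha> / \<beta>^2)"
        unfolding inner_minus_form nu r2 R_def by (simp only: mult.assoc arith1)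
      moreover have "((1/2) *\<^sub>R x0 + (1 / sqrt 2) *\<^sub>R u - xs) - (- ((1/2) *\<^sub>R x0) + (1 / sqrt 2) *\<^sub>R u - ys) = 0"
        unfolding xs_def ys_def by (simp add: algebra_simps)
      ultimately show "w \<in> proj \<beta> (Calpha \<alpha>) (x0, -x0, g0)" unfolding PC wu gs_def by simp
    qed
  qed
  have SING: "(\<exists>w. S = {w}) \<longleftrightarrow> \<alpha> * (g0 - \<alpha> / \<beta>^2) = - (norm x0 ^ 2 / 4)"
  proof
    assume "\<exists>w. S = {w}"
    then obtain w where sw: "S = {w}" by blast
    show "\<alpha> * (g0 - \<alpha> / \<beta>^2) = - (norm x0 ^ 2 / 4)"
    proof (rule ccontr)
      assume "\<alpha> * (g0 - \<alpha> / \<beta>^2) \<noteq> - (norm x0 ^ 2 / 4)"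
      hence "R > 0" using R0 unfolding R_def by simp
      hence "r > 0" unfolding r_def by simp
      hence u0nz: "u0 \<noteq> 0" using u0 by auto
      have m1: "((1/2) *\<^sub>R x0 + (1 / sqrt 2) *\<^sub>R u0, - ((1/2) *\<^sub>R x0) + (1 / sqrt 2) *\<^sub>R u0, g0 - \<alpha> / \<beta>^2) \<in> S"
        unfolding S_def R_def[symmetric] r_def[symmetric] using u0 by blast
      have m2: "((1/2) *\<^sub>R x0 + (1 / sqrt 2) *\<^sub>R (-u0), - ((1/2) *\<^sub>R x0) + (1 / sqrt 2) *\<^sub>R (-u0), g0 - \<alpha> / \<beta>^2) \<in> S"
        unfolding S_def R_def[symmetric] r_def[symmetric] using u0 norm_minus_cancel[of u0] by blast
      have two: "a = b" if "a \<in> S" "b \<in> S" for a b using that sw by simp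
      from two[OF m1 m2] have "(1 / sqrt 2) *\<^sub>R u0 = (1 / sqrt 2) *\<^sub>R (-u0)" by simp
      hence "u0 = 0" by (rule halfneg)
      thus False using u0nz by simp
    qed
  next
    assume "\<alpha> * (g0 - \<alpha> / \<beta>^2) = - (norm x0 ^ 2 / 4)"
    hence "R = 0" unfolding R_def by simp
    hence "S = {((1/2) *\<^sub>R x0, - ((1/2) *\<^sub>R x0), g0 - \<alpha> / \<beta>^2)}" unfolding S_def R_def[symmetric] using \<open>R = 0\<close> by simp
    thus "\<exists>w. S = {w}" by blast
  qed
  show ?thesis using PS SING unfolding S_def by simp
qed


lemma arith3: "A \<le> B/4 \<Longrightarrow> 0 \<le> -2*A + B/(2::real)" by simp

lemma arith4: "A \<noteq> B/4 \<Longrightarrow> -2*A + B/(2::real) \<noteq> 0" by (simp add: field_simps)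

lemma arith5: "A = B/4 \<Longrightarrow> -2*A + B/(2::real) = 0" by simp

lemma arith2: "B/4 - (-2*A + B/2)/2 = (A::real)" by (simp add: field_simps)

lemma proj_plus:
  fixes x0 :: "'a::real_inner"
  assumes nontriv: "\<exists>z::'a. z \<noteq> 0" and b: "\<beta> \<noteq> 0"
    and h: "\<alpha>*(g0 + \<alpha>/\<beta>^2) \<le> norm x0^2/4"
  shows "proj \<beta> (Calpha \<alpha>) (x0, x0, g0) =
      {((1/2) *\<^sub>R x0 - (1 / sqrt 2) *\<^sub>R v, (1/2) *\<^sub>R x0 + (1 / sqrt 2) *\<^sub>R v, g0 + \<alpha> / \<beta>^2)
             | v. norm v = sqrt (- 2 * \<alpha> * (g0 + \<alpha> / \<beta>^2) + norm x0 ^ 2 / 2)} \<and>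
    ((\<exists>w. proj \<beta> (Calpha \<alpha>) (x0, x0, g0) = {w}) \<longleftrightarrow> \<alpha> * (g0 + \<alpha> / \<beta>^2) = norm x0 ^ 2 / 4)"
proof -
  define R where "R = - 2 * \<alpha> * (g0 + \<alpha> / \<beta>^2) + norm x0 ^ 2 / 2"
  define r where "r = sqrt R"
  have R0: "R \<ge> 0" using arith3[OF h] unfolding R_def by (simp only: mult.assoc)
  have r0: "r \<ge> 0" and r2: "r^2 = R" using R0 unfolding r_def by simp_all
  obtain u0 :: 'a where u0: "norm u0 = r" using exists_norm[OF nontriv r0] by blast
  define c :: real where "c = 1 / sqrt 2"
  define xs where "xs = (1/2) *\<^sub>R x0 - c *\<^sub>R u0"
  define ys where "ys = (1/2) *\<^sub>R x0 + c *\<^sub>R u0"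
  define gs where "gs = g0 + \<alpha>/\<beta>^2"
  have half: "(1/2) *\<^sub>R x0 + (1/2) *\<^sub>R x0 = x0" for x0 :: 'a
    by (simp add: scaleR_left_distrib[symmetric])
  have st1: "x0 = xs + 1 *\<^sub>R ys" unfolding xs_def ys_def using half[of x0] by (simp add: algebra_simps)
  have st2: "x0 = ys + 1 *\<^sub>R xs" unfolding xs_def ys_def using half[of x0] by (simp add: algebra_simps)
  have st3: "g0 = gs - 1*\<alpha>/\<beta>^2" unfolding gs_def by simp
  have f: "inner xs ys = \<alpha>*gs"
    unfolding xs_def ys_def c_def inner_plus_form u0 r2 R_def gs_def by (simp only: mult.assoc arith2)
  have tl: "\<bar>1::real\<bar> \<le> 1" by simp
  have PC: "proj \<beta> (Calpha \<alpha>) (x0, x0, g0) = {(x,y,g). inner x y = \<alpha>*g \<and>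
     norm ((x-xs) + (y-ys))^2 + \<beta>^2*(g-gs)^2 = 0}"
    unfolding proj_char[OF b tl st1 st2 st3 f] Qp1 ..
  define S where "S = {((1/2) *\<^sub>R x0 - (1 / sqrt 2) *\<^sub>R v, (1/2) *\<^sub>R x0 + (1 / sqrt 2) *\<^sub>R v, g0 + \<alpha> / \<beta>^2)
             | v. norm v = sqrt (- 2 * \<alpha> * (g0 + \<alpha> / \<beta>^2) + norm x0 ^ 2 / 2)}"
  have PS: "proj \<beta> (Calpha \<alpha>) (x0, x0, g0) = S"
  proof (rule set_eqI)
    fix w :: "'a \<times> 'a \<times> real"
    obtain x y g where w: "w = (x,y,g)" by (cases w)
    show "w \<in> proj \<beta> (Calpha \<alpha>) (x0, x0, g0) \<longleftrightarrow> w \<in> S"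
    proof
      assume "w \<in> proj \<beta> (Calpha \<alpha>) (x0, x0, g0)"
      hence c1: "inner x y = \<alpha>*g" and z: "norm ((x-xs) + (y-ys))^2 + \<beta>^2*(g-gs)^2 = 0"
        unfolding PC w by auto
      have nn1: "0 \<le> norm ((x-xs) + (y-ys))^2" and nn2: "0 \<le> \<beta>^2*(g-gs)^2" by simp_all
      have z1: "norm ((x-xs) + (y-ys))^2 = 0" and z2: "\<beta>^2*(g-gs)^2 = 0"
        using z nn1 nn2 by linarith+
      from z2 b have gg: "g = gs" by simp
      from z1 have "(x - xs) + (y - ys) = 0" by simp
      hence "x - xs = -(y - ys)" by (simp only: eq_neg_iff_add_eq_0)
      hence xx: "x = -(y - ys) + xs" by (metis diff_add_cancel)
      have x0e: "x0 = xs + ys" using st1 by simp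
      have xy: "x = x0 - y" unfolding x0e using xx by (simp add: algebra_simps)
      define v where "v = sqrt 2 *\<^sub>R (y - (1/2) *\<^sub>R x0)"
      have yv: "y = (1/2) *\<^sub>R x0 + (1 / sqrt 2) *\<^sub>R v" unfolding v_def by simp
      have xv: "x = (1/2) *\<^sub>R x0 - (1 / sqrt 2) *\<^sub>R v" unfolding xy
        using yv half[of x0] by (simp add: algebra_simps)
      have "norm x0^2/4 - norm v^2/2 = \<alpha>*gs" using c1 gg unfolding xv yv inner_plus_form by simp
      hence "norm v^2 = R" unfolding R_def gs_def by simp
      hence "norm v = sqrt R" by (metis norm_ge_zero real_sqrt_unique)
      thus "w \<in> S" unfolding S_def R_def[symmetric] w xv yv gg gs_def by blast
    next
      assume "w \<in> S"
      then obtain v where nu: "norm v = r" and wu: "w = ((1/2) *\<^sub>R x0 - (1 / sqrt 2) *\<^sub>R v, (1/2) *\<^sub>R x0 + (1 / sqrt 2) *\<^sub>R v, g0 + \<alpha> / \<beta>^2)"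
        unfolding S_def R_def[symmetric] r_def[symmetric] by blast
      have "inner ((1/2) *\<^sub>R x0 - (1 / sqrt 2) *\<^sub>R v) ((1/2) *\<^sub>R x0 + (1 / sqrt 2) *\<^sub>R v) = \<alpha> * (g0 + \<alpha> / \<beta>^2)"
        unfolding inner_plus_form nu r2 R_def by (simp only: mult.assoc arith2)
      moreover have "((1/2) *\<^sub>R x0 - (1 / sqrt 2) *\<^sub>R v - xs) + ((1/2) *\<^sub>R x0 + (1 / sqrt 2) *\<^sub>R v - ys) = 0"
        unfolding xs_def ys_def c_def by (simp add: algebra_simps)
      ultimately show "w \<in> proj \<beta> (Calpha \<alpha>) (x0, x0, g0)" unfolding PC wu gs_def by simp
    qed
  qed
  have SING: "(\<exists>w. S = {w}) \<longleftrightarrow> \<alpha> * (g0 + \<alpha> / \<beta>^2) = norm x0 ^ 2 / 4"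
  proof
    assume "\<exists>w. S = {w}"
    then obtain w where sw: "S = {w}" by blast
    show "\<alpha> * (g0 + \<alpha> / \<beta>^2) = norm x0 ^ 2 / 4"
    proof (rule ccontr)
      assume "\<alpha> * (g0 + \<alpha> / \<beta>^2) \<noteq> norm x0 ^ 2 / 4"
      hence "R \<noteq> 0" using arith4 unfolding R_def by (simp only: mult.assoc)
      hence "R > 0" using R0 by simp
      hence "r > 0" unfolding r_def by simp
      hence u0nz: "u0 \<noteq> 0" using u0 by auto
      have m1: "((1/2) *\<^sub>R x0 - (1 / sqrt 2) *\<^sub>R u0, (1/2) *\<^sub>R x0 + (1 / sqrt 2) *\<^sub>R u0, g0 + \<alpha> / \<beta>^2) \<in> S"
        unfolding S_def R_def[symmetric] r_def[symmetric] using u0 by blast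
      have m2: "((1/2) *\<^sub>R x0 - (1 / sqrt 2) *\<^sub>R (-u0), (1/2) *\<^sub>R x0 + (1 / sqrt 2) *\<^sub>R (-u0), g0 + \<alpha> / \<beta>^2) \<in> S"
        unfolding S_def R_def[symmetric] r_def[symmetric] using u0 norm_minus_cancel[of u0] by blast
      have two: "a = b" if "a \<in> S" "b \<in> S" for a b using that sw by simp
      from two[OF m1 m2] have "(1 / sqrt 2) *\<^sub>R u0 = (1 / sqrt 2) *\<^sub>R (-u0)" by simp
      hence "u0 = 0" by (rule halfneg)
      thus False using u0nz by simp
    qed
  next
    assume "\<alpha> * (g0 + \<alpha> / \<beta>^2) = norm x0 ^ 2 / 4"
    hence "R = 0" unfolding R_def mult.assoc by (rule arith5)
    hence "S = {((1/2) *\<^sub>R x0, (1/2) *\<^sub>R x0, g0 + \<alpha> / \<beta>^2)}" unfolding S_def R_def[symmetric] using \<open>R = 0\<close> by simp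
    thus "\<exists>w. S = {w}" by blast
  qed
  show ?thesis using PS SING unfolding S_def by simp
qed


lemma root_exists:
  fixes h :: "real \<Rightarrow> real"
  assumes c: "continuous_on {-1..1} h" and s: "h (-1) * h 1 < 0"
  shows "\<exists>t. -1 < t \<and> t < 1 \<and> h t = 0"
proof (cases "h (-1) < 0")
  case True
  hence "h 1 > 0" using s mult_nonpos_nonpos[of "h (-1)" "h 1"] by linarith
  then obtain t where "-1 \<le> t" "t \<le> 1" "h t = 0" using IVT'[of h "-1" 0 1] c True by auto
  moreover have "t \<noteq> -1" "t \<noteq> 1" using True \<open>h 1 > 0\<close> \<open>h t = 0\<close> by auto
  ultimately have "-1 < t" "t < 1" "h t = 0" by auto
  thus ?thesis by blast
next
  case False
  have "h (-1) \<noteq> 0" using s by auto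
  hence hm: "h (-1) > 0" using False by linarith
  have "h 1 < 0" using s hm mult_nonneg_nonneg[of "h (-1)" "h 1"] by linarith
  note hm this
  then obtain t where "-1 \<le> t" "t \<le> 1" "h t = 0" using IVT2'[of h 1 0 "-1"] c by auto
  moreover have "t \<noteq> -1" "t \<noteq> 1" using \<open>h (-1) > 0\<close> \<open>h 1 < 0\<close> \<open>h t = 0\<close> by auto
  ultimately have "-1 < t" "t < 1" "h t = 0" by auto
  thus ?thesis by blast
qed

lemma sing_snd: "S = {(a,b,c)} \<Longrightarrow> S = {(a',b',c')} \<Longrightarrow> c = c'"
  by simp

lemma partI:
  fixes \<alpha> \<beta> \<gamma>0 :: real and x0 y0 :: "'a::{real_inner, complete_space}"
  assumes alpha: "\<alpha> \<noteq> 0" and beta: "\<beta> > 0"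
  shows "(x0 \<noteq> y0 \<and> x0 \<noteq> - y0 \<longrightarrow>
      (\<exists>!t. t \<in> {-1<..<1} \<and> gfun \<alpha> \<beta> x0 y0 \<gamma>0 t = 0) \<and>
      (\<forall>t \<in> {-1<..<1}. gfun \<alpha> \<beta> x0 y0 \<gamma>0 t = 0 \<longrightarrow>
         proj \<beta> (Calpha \<alpha>) (x0, y0, \<gamma>0) =
           {((1 / (1 - t^2)) *\<^sub>R (x0 - t *\<^sub>R y0), (1 / (1 - t^2)) *\<^sub>R (y0 - t *\<^sub>R x0),
             \<gamma>0 + t * \<alpha> / \<beta>^2)}))"
proof (intro impI)
  assume ne: "x0 \<noteq> y0 \<and> x0 \<noteq> - y0"
  have b: "\<beta> \<noteq> 0" using beta by simp
  define p where "p = 2 * inner x0 y0"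
  define q where "q = norm x0 ^ 2 + norm y0 ^ 2"
  define M where "M t = 2 * t * \<alpha>^2 / \<beta>^2 + 2 * \<alpha> * \<gamma>0" for t
  define h where "h t = ((t^2 + 1) * p - 2 * t * q) - (1 - t^2)^2 * M t" for t
  have gh: "gfun \<alpha> \<beta> x0 y0 \<gamma>0 t = h t / (1 - t^2)^2" if "\<bar>t\<bar> < 1" for t
  proof -
    have "t^2 < 1" using that by (simp add: abs_square_less_1)
    hence "1 - t^2 \<noteq> 0" by simp
    thus ?thesis unfolding gfun_def Let_def h_def M_def p_def q_def by (simp add: field_simps)
  qed
  have P: "proj \<beta> (Calpha \<alpha>) (x0, y0, \<gamma>0) =
           {((1 / (1 - t^2)) *\<^sub>R (x0 - t *\<^sub>R y0), (1 / (1 - t^2)) *\<^sub>R (y0 - t *\<^sub>R x0),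
             \<gamma>0 + t * \<alpha> / \<beta>^2)}" if t: "t \<in> {-1<..<1}" and g: "gfun \<alpha> \<beta> x0 y0 \<gamma>0 t = 0" for t
  proof -
    have ta: "\<bar>t\<bar> < 1" using t by auto
    define d where "d = 1 - t^2"
    have "t^2 < 1" using ta by (simp add: abs_square_less_1)
    hence d0: "d \<noteq> 0" unfolding d_def by simp
    define xs where "xs = (1 / d) *\<^sub>R (x0 - t *\<^sub>R y0)"
    define ys where "ys = (1 / d) *\<^sub>R (y0 - t *\<^sub>R x0)"
    define gs where "gs = \<gamma>0 + t * \<alpha> / \<beta>^2"
    have "xs + t *\<^sub>R ys = (1/d) *\<^sub>R (d *\<^sub>R x0)"
      unfolding xs_def ys_def d_def by (simp add: algebra_simps power2_eq_square)
    hence st1: "x0 = xs + t *\<^sub>R ys" using d0 by simp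
    have "ys + t *\<^sub>R xs = (1/d) *\<^sub>R (d *\<^sub>R y0)"
      unfolding xs_def ys_def d_def by (simp add: algebra_simps power2_eq_square)
    hence st2: "y0 = ys + t *\<^sub>R xs" using d0 by simp
    have st3: "\<gamma>0 = gs - t * \<alpha> / \<beta>^2" unfolding gs_def by simp
    have "inner (x0 - t *\<^sub>R y0) (y0 - t *\<^sub>R x0) = ((t^2 + 1) * p - 2 * t * q) / 2"
      unfolding p_def q_def power2_norm_eq_inner
      by (simp add: inner_diff_left inner_diff_right inner_commute algebra_simps power2_eq_square)
    note ie = this
    have i0: "inner xs ys = (1/d) * (1/d) * inner (x0 - t *\<^sub>R y0) (y0 - t *\<^sub>R x0)"
      unfolding xs_def ys_def by simp
    have ixy: "inner xs ys = ((t^2 + 1) * p - 2 * t * q) / (2 * d^2)"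
      unfolding i0 ie by (simp add: power2_eq_square)
    have "h t = 0" using g gh[OF ta] d0 unfolding d_def by simp
    hence "((t^2 + 1) * p - 2 * t * q) = d^2 * M t" unfolding h_def d_def by simp
    hence "inner xs ys = M t / 2" unfolding ixy using d0 by simp
    hence f: "inner xs ys = \<alpha> * gs" unfolding M_def gs_def using b by (simp add: field_simps power2_eq_square)
    show ?thesis using proj_strict[OF b ta st1 st2 st3 f] unfolding xs_def ys_def gs_def d_def .
  qed
  have ex: "\<exists>t. -1 < t \<and> t < 1 \<and> h t = 0"
  proof (rule root_exists)
    show "continuous_on {-1..1} h" unfolding h_def M_def using b by (intro continuous_intros) auto
    have pq1: "p + q = norm (x0 + y0)^2" unfolding p_def q_def power2_norm_eq_inner
      by (simp add: inner_add_left inner_add_right inner_commute)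
    have pq2: "q - p = norm (x0 - y0)^2" unfolding p_def q_def power2_norm_eq_inner
      by (simp add: inner_diff_left inner_diff_right inner_commute)
    have "x0 + y0 \<noteq> 0" using ne eq_neg_iff_add_eq_0[of x0 y0] by blast
    hence a1: "p + q > 0" unfolding pq1 by simp
    have "x0 - y0 \<noteq> 0" using ne by simp
    hence a2: "q - p > 0" unfolding pq2 by simp
    have "h (-1) = 2 * (p + q)" "h 1 = - 2 * (q - p)" unfolding h_def by simp_all
    thus "h (-1) * h 1 < 0" using a1 a2 by (simp add: mult_pos_neg)
  qed
  then obtain t0 where t0: "-1 < t0" "t0 < 1" "h t0 = 0" by blast
  have g0: "gfun \<alpha> \<beta> x0 y0 \<gamma>0 t0 = 0" using gh[of t0] t0 by simp
  have uniq: "t1 = t2" if "t1 \<in> {-1<..<1}" "gfun \<alpha> \<beta> x0 y0 \<gamma>0 t1 = 0"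
     "t2 \<in> {-1<..<1}" "gfun \<alpha> \<beta> x0 y0 \<gamma>0 t2 = 0" for t1 t2
  proof -
    have "\<gamma>0 + t1 * \<alpha> / \<beta>^2 = \<gamma>0 + t2 * \<alpha> / \<beta>^2"
      by (rule sing_snd[OF P[OF that(1,2)] P[OF that(3,4)]])
    thus ?thesis using alpha b by simp
  qed
  show "(\<exists>!t. t \<in> {-1<..<1} \<and> gfun \<alpha> \<beta> x0 y0 \<gamma>0 t = 0) \<and>
      (\<forall>t \<in> {-1<..<1}. gfun \<alpha> \<beta> x0 y0 \<gamma>0 t = 0 \<longrightarrow>
         proj \<beta> (Calpha \<alpha>) (x0, y0, \<gamma>0) =
           {((1 / (1 - t^2)) *\<^sub>R (x0 - t *\<^sub>R y0), (1 / (1 - t^2)) *\<^sub>R (y0 - t *\<^sub>R x0),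
             \<gamma>0 + t * \<alpha> / \<beta>^2)})"
  proof
    show "\<exists>!t. t \<in> {-1<..<1} \<and> gfun \<alpha> \<beta> x0 y0 \<gamma>0 t = 0"
      apply (rule ex1I[of _ t0])
      using t0 g0 apply simp
      apply (erule conjE)
      apply (rule uniq)
      using t0 g0 by auto
    show "\<forall>t \<in> {-1<..<1}. gfun \<alpha> \<beta> x0 y0 \<gamma>0 t = 0 \<longrightarrow>
         proj \<beta> (Calpha \<alpha>) (x0, y0, \<gamma>0) =
           {((1 / (1 - t^2)) *\<^sub>R (x0 - t *\<^sub>R y0), (1 / (1 - t^2)) *\<^sub>R (y0 - t *\<^sub>R x0),
             \<gamma>0 + t * \<alpha> / \<beta>^2)}" by (intro ballI impI) (erule (1) P)
  qed
qed


lemma partII: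
  fixes \<alpha> \<beta> \<gamma>0 :: real and x0 y0 :: "'a::{real_inner, complete_space}"
  assumes nontriv: "\<exists>z::'a. z \<noteq> 0" and alpha: "\<alpha> \<noteq> 0" and beta: "\<beta> > 0"
  shows "(y0 = - x0 \<and> x0 \<noteq> 0 \<longrightarrow>
      (\<alpha> * (\<gamma>0 - \<alpha> / \<beta>^2) < - (norm x0 ^ 2 / 4) \<longrightarrow>
         (\<exists>!t. t \<in> {-1<..<1} \<and> g1fun \<alpha> \<beta> x0 \<gamma>0 t = 0) \<and>
         (\<forall>t \<in> {-1<..<1}. g1fun \<alpha> \<beta> x0 \<gamma>0 t = 0 \<longrightarrow>
            proj \<beta> (Calpha \<alpha>) (x0, - x0, \<gamma>0) =
              {((1 / (1 - t)) *\<^sub>R x0, (1 / (1 - t)) *\<^sub>R (- x0), \<gamma>0 + t * \<alpha> / \<beta>^2)})) \<and>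
      (\<alpha> * (\<gamma>0 - \<alpha> / \<beta>^2) \<ge> - (norm x0 ^ 2 / 4) \<longrightarrow>
         proj \<beta> (Calpha \<alpha>) (x0, - x0, \<gamma>0) =
           {((1/2) *\<^sub>R x0 + (1 / sqrt 2) *\<^sub>R u, - ((1/2) *\<^sub>R x0) + (1 / sqrt 2) *\<^sub>R u, \<gamma>0 - \<alpha> / \<beta>^2)
             | u. norm u = sqrt (2 * \<alpha> * (\<gamma>0 - \<alpha> / \<beta>^2) + norm x0 ^ 2 / 2)} \<and>
         ((\<exists>w. proj \<beta> (Calpha \<alpha>) (x0, - x0, \<gamma>0) = {w}) \<longleftrightarrow>
            \<alpha> * (\<gamma>0 - \<alpha> / \<beta>^2) = - (norm x0 ^ 2 / 4))))"
proof (intro impI conjI)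
  assume "y0 = - x0 \<and> x0 \<noteq> 0"
  hence x0nz: "x0 \<noteq> 0" by simp
  have b: "\<beta> \<noteq> 0" using beta by simp
  {
    assume H: "\<alpha> * (\<gamma>0 - \<alpha> / \<beta>^2) < - (norm x0 ^ 2 / 4)"
    define n where "n = norm x0 ^ 2"
    define M where "M t = 2 * t * \<alpha>^2 / \<beta>^2 + 2 * \<alpha> * \<gamma>0" for t
    define h where "h t = 2 * n + (1 - t)^2 * M t" for t
    have gh: "g1fun \<alpha> \<beta> x0 \<gamma>0 t = h t / (1 - t)^2" if "t < 1" for t
    proof -
      have "1 - t \<noteq> 0" using that by simp
      thus ?thesis unfolding g1fun_def h_def M_def n_def by (simp add: field_simps)
    qed
    have P: "proj \<beta> (Calpha \<alpha>) (x0, - x0, \<gamma>0) =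
              {((1 / (1 - t)) *\<^sub>R x0, (1 / (1 - t)) *\<^sub>R (- x0), \<gamma>0 + t * \<alpha> / \<beta>^2)}"
      if t: "t \<in> {-1<..<1}" and g: "g1fun \<alpha> \<beta> x0 \<gamma>0 t = 0" for t
    proof -
      have ta: "\<bar>t\<bar> < 1" using t by auto
      define d where "d = 1 - t"
      have d0: "d \<noteq> 0" using t unfolding d_def by simp
      define xs where "xs = (1 / d) *\<^sub>R x0"
      define ys where "ys = (1 / d) *\<^sub>R (- x0)"
      define gs where "gs = \<gamma>0 + t * \<alpha> / \<beta>^2"
      have "xs + t *\<^sub>R ys = (1/d) *\<^sub>R (d *\<^sub>R x0)"
        unfolding xs_def ys_def d_def by (simp add: algebra_simps)
      hence st1: "x0 = xs + t *\<^sub>R ys" using d0 by simp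
      have "ys + t *\<^sub>R xs = (1/d) *\<^sub>R (d *\<^sub>R (-x0))"
        unfolding xs_def ys_def d_def by (simp add: algebra_simps)
      hence st2: "-x0 = ys + t *\<^sub>R xs" using d0 by simp
      have st3: "\<gamma>0 = gs - t * \<alpha> / \<beta>^2" unfolding gs_def by simp
      have ixy: "inner xs ys = - n / d^2"
        unfolding xs_def ys_def n_def power2_norm_eq_inner by (simp add: power2_eq_square)
      have "h t = 0" using g gh[of t] t d0 unfolding d_def by simp
      hence "2 * n = -(d^2 * M t)" unfolding h_def d_def by simp
      hence "inner xs ys = M t / 2" unfolding ixy using d0 by (simp add: field_simps)
      hence f: "inner xs ys = \<alpha> * gs" unfolding M_def gs_def using b by (simp add: field_simps power2_eq_square)
      show ?thesis using proj_strict[OF b ta st1 st2 st3 f] unfolding xs_def ys_def gs_def d_def .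
    qed
    have ex: "\<exists>t. -1 < t \<and> t < 1 \<and> h t = 0"
    proof (rule root_exists)
      show "continuous_on {-1..1} h" unfolding h_def M_def using b by (intro continuous_intros) auto
      have a1: "n > 0" unfolding n_def using x0nz by simp
      have "h (-1) = 2 * n + 8 * (\<alpha> * (\<gamma>0 - \<alpha> / \<beta>^2))" unfolding h_def M_def
        by (simp add: algebra_simps power2_eq_square)
      hence a2: "h (-1) < 0" using H unfolding n_def by simp
      have "h 1 = 2 * n" unfolding h_def by simp
      thus "h (-1) * h 1 < 0" using a1 a2 by (simp add: mult_neg_pos)
    qed
    then obtain t0 where t0: "-1 < t0" "t0 < 1" "h t0 = 0" by blast
    have g0: "g1fun \<alpha> \<beta> x0 \<gamma>0 t0 = 0" using gh[of t0] t0 by simp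
    have uniq: "t1 = t2" if "t1 \<in> {-1<..<1}" "g1fun \<alpha> \<beta> x0 \<gamma>0 t1 = 0"
       "t2 \<in> {-1<..<1}" "g1fun \<alpha> \<beta> x0 \<gamma>0 t2 = 0" for t1 t2
    proof -
      have "\<gamma>0 + t1 * \<alpha> / \<beta>^2 = \<gamma>0 + t2 * \<alpha> / \<beta>^2"
        by (rule sing_snd[OF P[OF that(1,2)] P[OF that(3,4)]])
      thus ?thesis using alpha b by simp
    qed
    have "(\<exists>!t. t \<in> {-1<..<1} \<and> g1fun \<alpha> \<beta> x0 \<gamma>0 t = 0)"
      apply (rule ex1I[of _ t0])
      using t0 g0 apply simp
      apply (erule conjE)
      apply (rule uniq)
      using t0 g0 by auto
    note E = this
    have RES: "(\<exists>!t. t \<in> {-1<..<1} \<and> g1fun \<alpha> \<beta> x0 \<gamma>0 t = 0) \<and> (\<forall>t \<in> {-1<..<1}. g1fun \<alpha> \<beta> x0 \<gamma>0 t = 0 \<longrightarrow>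
            proj \<beta> (Calpha \<alpha>) (x0, - x0, \<gamma>0) =
              {((1 / (1 - t)) *\<^sub>R x0, (1 / (1 - t)) *\<^sub>R (- x0), \<gamma>0 + t * \<alpha> / \<beta>^2)})" by (intro conjI E ballI impI) (erule (1) P)
  }
  note RES = this
  show "\<alpha> * (\<gamma>0 - \<alpha> / \<beta>^2) < - (norm x0 ^ 2 / 4) \<Longrightarrow> (\<exists>!t. t \<in> {-1<..<1} \<and> g1fun \<alpha> \<beta> x0 \<gamma>0 t = 0)" by (fact conjunct1[OF RES])
  show "\<alpha> * (\<gamma>0 - \<alpha> / \<beta>^2) < - (norm x0 ^ 2 / 4) \<Longrightarrow> (\<forall>t \<in> {-1<..<1}. g1fun \<alpha> \<beta> x0 \<gamma>0 t = 0 \<longrightarrow>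
            proj \<beta> (Calpha \<alpha>) (x0, - x0, \<gamma>0) =
              {((1 / (1 - t)) *\<^sub>R x0, (1 / (1 - t)) *\<^sub>R (- x0), \<gamma>0 + t * \<alpha> / \<beta>^2)})" by (fact conjunct2[OF RES])
  assume H: "\<alpha> * (\<gamma>0 - \<alpha> / \<beta>^2) \<ge> - (norm x0 ^ 2 / 4)"
  note R = proj_minus[OF nontriv b H]
  show "proj \<beta> (Calpha \<alpha>) (x0, - x0, \<gamma>0) =
           {((1/2) *\<^sub>R x0 + (1 / sqrt 2) *\<^sub>R u, - ((1/2) *\<^sub>R x0) + (1 / sqrt 2) *\<^sub>R u, \<gamma>0 - \<alpha> / \<beta>^2)
             | u. norm u = sqrt (2 * \<alpha> * (\<gamma>0 - \<alpha> / \<beta>^2) + norm x0 ^ 2 / 2)}" by (fact conjunct1[OF R])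
  show "(\<exists>w. proj \<beta> (Calpha \<alpha>) (x0, - x0, \<gamma>0) = {w}) \<longleftrightarrow>
            \<alpha> * (\<gamma>0 - \<alpha> / \<beta>^2) = - (norm x0 ^ 2 / 4)" by (fact conjunct2[OF R])
qed


lemma partIII:
  fixes \<alpha> \<beta> \<gamma>0 :: real and x0 y0 :: "'a::{real_inner, complete_space}"
  assumes nontriv: "\<exists>z::'a. z \<noteq> 0" and alpha: "\<alpha> \<noteq> 0" and beta: "\<beta> > 0"
  shows "(y0 = x0 \<and> x0 \<noteq> 0 \<longrightarrow>
      (\<alpha> * (\<gamma>0 + \<alpha> / \<beta>^2) > norm x0 ^ 2 / 4 \<longrightarrow>
         (\<exists>!t. t \<in> {-1<..<1} \<and> g2fun \<alpha> \<beta> x0 \<gamma>0 t = 0) \<and>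
         (\<forall>t \<in> {-1<..<1}. g2fun \<alpha> \<beta> x0 \<gamma>0 t = 0 \<longrightarrow>
            proj \<beta> (Calpha \<alpha>) (x0, x0, \<gamma>0) =
              {((1 / (1 + t)) *\<^sub>R x0, (1 / (1 + t)) *\<^sub>R x0, \<gamma>0 + t * \<alpha> / \<beta>^2)})) \<and>
      (\<alpha> * (\<gamma>0 + \<alpha> / \<beta>^2) \<le> norm x0 ^ 2 / 4 \<longrightarrow>
         proj \<beta> (Calpha \<alpha>) (x0, x0, \<gamma>0) =
           {((1/2) *\<^sub>R x0 - (1 / sqrt 2) *\<^sub>R v, (1/2) *\<^sub>R x0 + (1 / sqrt 2) *\<^sub>R v, \<gamma>0 + \<alpha> / \<beta>^2)
             | v. norm v = sqrt (- 2 * \<alpha> * (\<gamma>0 + \<alpha> / \<beta>^2) + norm x0 ^ 2 / 2)} \<and>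
         ((\<exists>w. proj \<beta> (Calpha \<alpha>) (x0, x0, \<gamma>0) = {w}) \<longleftrightarrow>
            \<alpha> * (\<gamma>0 + \<alpha> / \<beta>^2) = norm x0 ^ 2 / 4)))"
proof (intro impI conjI)
  assume "y0 = x0 \<and> x0 \<noteq> 0"
  hence x0nz: "x0 \<noteq> 0" by simp
  have b: "\<beta> \<noteq> 0" using beta by simp
  {
    assume H: "\<alpha> * (\<gamma>0 + \<alpha> / \<beta>^2) > norm x0 ^ 2 / 4"
    define n where "n = norm x0 ^ 2"
    define M where "M t = 2 * t * \<alpha>^2 / \<beta>^2 + 2 * \<alpha> * \<gamma>0" for t
    define h where "h t = 2 * n - (1 + t)^2 * M t" for t
    have gh: "g2fun \<alpha> \<beta> x0 \<gamma>0 t = h t / (1 + t)^2" if "-1 < t" for t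
    proof -
      have "1 + t \<noteq> 0" using that by simp
      thus ?thesis unfolding g2fun_def h_def M_def n_def by (simp add: field_simps)
    qed
    have P: "proj \<beta> (Calpha \<alpha>) (x0, x0, \<gamma>0) =
              {((1 / (1 + t)) *\<^sub>R x0, (1 / (1 + t)) *\<^sub>R x0, \<gamma>0 + t * \<alpha> / \<beta>^2)}"
      if t: "t \<in> {-1<..<1}" and g: "g2fun \<alpha> \<beta> x0 \<gamma>0 t = 0" for t
    proof -
      have ta: "\<bar>t\<bar> < 1" using t by auto
      define d where "d = 1 + t"
      have d0: "d \<noteq> 0" using t unfolding d_def by simp
      define xs where "xs = (1 / d) *\<^sub>R x0"
      define ys where "ys = (1 / d) *\<^sub>R x0"
      define gs where "gs = \<gamma>0 + t * \<alpha> / \<beta>^2"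
      have "xs + t *\<^sub>R ys = (1/d) *\<^sub>R (d *\<^sub>R x0)"
        unfolding xs_def ys_def d_def by (simp add: algebra_simps)
      hence st1: "x0 = xs + t *\<^sub>R ys" using d0 by simp
      have "ys + t *\<^sub>R xs = (1/d) *\<^sub>R (d *\<^sub>R x0)"
        unfolding xs_def ys_def d_def by (simp add: algebra_simps)
      hence st2: "x0 = ys + t *\<^sub>R xs" using d0 by simp
      have st3: "\<gamma>0 = gs - t * \<alpha> / \<beta>^2" unfolding gs_def by simp
      have ixy: "inner xs ys = n / d^2"
        unfolding xs_def ys_def n_def power2_norm_eq_inner by (simp add: power2_eq_square)
      have "h t = 0" using g gh[of t] t d0 unfolding d_def by simp
      hence "2 * n = d^2 * M t" unfolding h_def d_def by simp
      hence "inner xs ys = M t / 2" unfolding ixy using d0 by (simp add: field_simps)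
      hence f: "inner xs ys = \<alpha> * gs" unfolding M_def gs_def using b by (simp add: field_simps power2_eq_square)
      show ?thesis using proj_strict[OF b ta st1 st2 st3 f] unfolding xs_def ys_def gs_def d_def .
    qed
    have ex: "\<exists>t. -1 < t \<and> t < 1 \<and> h t = 0"
    proof (rule root_exists)
      show "continuous_on {-1..1} h" unfolding h_def M_def using b by (intro continuous_intros) auto
      have a1: "n > 0" unfolding n_def using x0nz by simp
      have "h 1 = 2 * n - 8 * (\<alpha> * (\<gamma>0 + \<alpha> / \<beta>^2))" unfolding h_def M_def
        by (simp add: algebra_simps power2_eq_square)
      hence a2: "h 1 < 0" using H unfolding n_def by (simp add: mult.commute)
      have "h (-1) = 2 * n" unfolding h_def by simp
      thus "h (-1) * h 1 < 0" using a1 a2 by (simp add: mult_pos_neg)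
    qed
    then obtain t0 where t0: "-1 < t0" "t0 < 1" "h t0 = 0" by blast
    have g0: "g2fun \<alpha> \<beta> x0 \<gamma>0 t0 = 0" using gh[of t0] t0 by simp
    have uniq: "t1 = t2" if "t1 \<in> {-1<..<1}" "g2fun \<alpha> \<beta> x0 \<gamma>0 t1 = 0"
       "t2 \<in> {-1<..<1}" "g2fun \<alpha> \<beta> x0 \<gamma>0 t2 = 0" for t1 t2
    proof -
      have "\<gamma>0 + t1 * \<alpha> / \<beta>^2 = \<gamma>0 + t2 * \<alpha> / \<beta>^2"
        by (rule sing_snd[OF P[OF that(1,2)] P[OF that(3,4)]])
      thus ?thesis using alpha b by simp
    qed
    have "(\<exists>!t. t \<in> {-1<..<1} \<and> g2fun \<alpha> \<beta> x0 \<gamma>0 t = 0)"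
      apply (rule ex1I[of _ t0])
      using t0 g0 apply simp
      apply (erule conjE)
      apply (rule uniq)
      using t0 g0 by auto
    note E = this
    have RES: "(\<exists>!t. t \<in> {-1<..<1} \<and> g2fun \<alpha> \<beta> x0 \<gamma>0 t = 0) \<and> (\<forall>t \<in> {-1<..<1}. g2fun \<alpha> \<beta> x0 \<gamma>0 t = 0 \<longrightarrow>
            proj \<beta> (Calpha \<alpha>) (x0, x0, \<gamma>0) =
              {((1 / (1 + t)) *\<^sub>R x0, (1 / (1 + t)) *\<^sub>R x0, \<gamma>0 + t * \<alpha> / \<beta>^2)})" by (intro conjI E ballI impI) (erule (1) P)
  }
  note RES = this
  show "\<alpha> * (\<gamma>0 + \<alpha> / \<beta>^2) > norm x0 ^ 2 / 4 \<Longrightarrow> (\<exists>!t. t \<in> {-1<..<1} \<and> g2fun \<alpha> \<beta> x0 \<gamma>0 t = 0)" by (fact conjunct1[OF RES])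
  show "\<alpha> * (\<gamma>0 + \<alpha> / \<beta>^2) > norm x0 ^ 2 / 4 \<Longrightarrow> (\<forall>t \<in> {-1<..<1}. g2fun \<alpha> \<beta> x0 \<gamma>0 t = 0 \<longrightarrow>
            proj \<beta> (Calpha \<alpha>) (x0, x0, \<gamma>0) =
              {((1 / (1 + t)) *\<^sub>R x0, (1 / (1 + t)) *\<^sub>R x0, \<gamma>0 + t * \<alpha> / \<beta>^2)})" by (fact conjunct2[OF RES])
  assume H: "\<alpha> * (\<gamma>0 + \<alpha> / \<beta>^2) \<le> norm x0 ^ 2 / 4"
  note R = proj_plus[OF nontriv b H]
  show "proj \<beta> (Calpha \<alpha>) (x0, x0, \<gamma>0) =
           {((1/2) *\<^sub>R x0 - (1 / sqrt 2) *\<^sub>R v, (1/2) *\<^sub>R x0 + (1 / sqrt 2) *\<^sub>R v, \<gamma>0 + \<alpha> / \<beta>^2)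
             | v. norm v = sqrt (- 2 * \<alpha> * (\<gamma>0 + \<alpha> / \<beta>^2) + norm x0 ^ 2 / 2)}" by (fact conjunct1[OF R])
  show "(\<exists>w. proj \<beta> (Calpha \<alpha>) (x0, x0, \<gamma>0) = {w}) \<longleftrightarrow>
            \<alpha> * (\<gamma>0 + \<alpha> / \<beta>^2) = norm x0 ^ 2 / 4" by (fact conjunct2[OF R])
qed


lemma partIV:
  fixes \<alpha> \<beta> \<gamma>0 :: real and x0 y0 :: "'a::{real_inner, complete_space}"
  assumes nontriv: "\<exists>z::'a. z \<noteq> 0" and alpha: "\<alpha> \<noteq> 0" and beta: "\<beta> > 0"
  shows "(x0 = 0 \<and> y0 = 0 \<longrightarrow>
      (\<alpha> * \<gamma>0 > \<alpha>^2 / \<beta>^2 \<longrightarrow>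
         proj \<beta> (Calpha \<alpha>) ((0::'a), (0::'a), \<gamma>0) =
           {((1 / sqrt 2) *\<^sub>R u, (1 / sqrt 2) *\<^sub>R u, \<gamma>0 - \<alpha> / \<beta>^2)
             | u. norm u = sqrt (2 * \<alpha> * (\<gamma>0 - \<alpha> / \<beta>^2))} \<and>
         \<not> (\<exists>w. proj \<beta> (Calpha \<alpha>) ((0::'a), (0::'a), \<gamma>0) = {w})) \<and>
      (\<bar>\<alpha> * \<gamma>0\<bar> \<le> \<alpha>^2 / \<beta>^2 \<longrightarrow>
         proj \<beta> (Calpha \<alpha>) ((0::'a), (0::'a), \<gamma>0) = {((0::'a), (0::'a), 0)}) \<and>
      (\<alpha> * \<gamma>0 < - (\<alpha>^2 / \<beta>^2) \<longrightarrow>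
         proj \<beta> (Calpha \<alpha>) ((0::'a), (0::'a), \<gamma>0) =
           {(- ((1 / sqrt 2) *\<^sub>R v), (1 / sqrt 2) *\<^sub>R v, \<gamma>0 + \<alpha> / \<beta>^2)
             | v. norm v = sqrt (- 2 * \<alpha> * (\<gamma>0 + \<alpha> / \<beta>^2))} \<and>
         \<not> (\<exists>w. proj \<beta> (Calpha \<alpha>) ((0::'a), (0::'a), \<gamma>0) = {w})))"
proof (intro impI conjI)
  have b: "\<beta> \<noteq> 0" using beta by simp
  have em: "\<alpha> * (\<gamma>0 - \<alpha> / \<beta>^2) = \<alpha> * \<gamma>0 - \<alpha>^2 / \<beta>^2"
    by (simp add: algebra_simps power2_eq_square)
  have ep: "\<alpha> * (\<gamma>0 + \<alpha> / \<beta>^2) = \<alpha> * \<gamma>0 + \<alpha>^2 / \<beta>^2"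
    by (simp add: algebra_simps power2_eq_square)
  {
    assume H: "\<alpha> * \<gamma>0 > \<alpha>^2 / \<beta>^2"
    have H': "\<alpha> * (\<gamma>0 - \<alpha> / \<beta>^2) \<ge> - (norm (0::'a) ^ 2 / 4)" using H em by simp
    note R = proj_minus[OF nontriv b H']
    have ne: "\<alpha> * (\<gamma>0 - \<alpha> / \<beta>^2) \<noteq> - (norm (0::'a) ^ 2 / 4)" using H em by simp
    show "proj \<beta> (Calpha \<alpha>) ((0::'a), (0::'a), \<gamma>0) =
           {((1 / sqrt 2) *\<^sub>R u, (1 / sqrt 2) *\<^sub>R u, \<gamma>0 - \<alpha> / \<beta>^2)
             | u. norm u = sqrt (2 * \<alpha> * (\<gamma>0 - \<alpha> / \<beta>^2))}"
      using R by simp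
    show "\<not> (\<exists>w. proj \<beta> (Calpha \<alpha>) ((0::'a), (0::'a), \<gamma>0) = {w})"
      using conjunct2[OF R] ne by simp
  }
  {
    assume H: "\<alpha> * \<gamma>0 < - (\<alpha>^2 / \<beta>^2)"
    have H': "\<alpha> * (\<gamma>0 + \<alpha> / \<beta>^2) \<le> norm (0::'a) ^ 2 / 4" using H ep by simp
    note R = proj_plus[OF nontriv b H']
    have ne: "\<alpha> * (\<gamma>0 + \<alpha> / \<beta>^2) \<noteq> norm (0::'a) ^ 2 / 4" using H ep by simp
    show "proj \<beta> (Calpha \<alpha>) ((0::'a), (0::'a), \<gamma>0) =
           {(- ((1 / sqrt 2) *\<^sub>R v), (1 / sqrt 2) *\<^sub>R v, \<gamma>0 + \<alpha> / \<beta>^2)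
             | v. norm v = sqrt (- 2 * \<alpha> * (\<gamma>0 + \<alpha> / \<beta>^2))}"
      using R by simp
    show "\<not> (\<exists>w. proj \<beta> (Calpha \<alpha>) ((0::'a), (0::'a), \<gamma>0) = {w})"
      using conjunct2[OF R] ne by simp
  }
  assume H: "\<bar>\<alpha> * \<gamma>0\<bar> \<le> \<alpha>^2 / \<beta>^2"
  consider (a) "\<alpha> * \<gamma>0 = \<alpha>^2 / \<beta>^2" | (c) "\<alpha> * \<gamma>0 = - (\<alpha>^2 / \<beta>^2)"
    | (s) "\<bar>\<alpha> * \<gamma>0\<bar> < \<alpha>^2 / \<beta>^2" using H by linarith
  thus "proj \<beta> (Calpha \<alpha>) ((0::'a), (0::'a), \<gamma>0) = {((0::'a), (0::'a), 0)}"
  proof cases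
    case a
    have z: "\<alpha> * (\<gamma>0 - \<alpha> / \<beta>^2) = 0" using a em by simp
    hence gz: "\<gamma>0 - \<alpha> / \<beta>^2 = 0" using alpha by simp
    have H': "\<alpha> * (\<gamma>0 - \<alpha> / \<beta>^2) \<ge> - (norm (0::'a) ^ 2 / 4)" unfolding z by simp
    note R = proj_minus[OF nontriv b H']
    show ?thesis using R gz by simp
  next
    case c
    have z: "\<alpha> * (\<gamma>0 + \<alpha> / \<beta>^2) = 0" using c ep by simp
    hence gz: "\<gamma>0 + \<alpha> / \<beta>^2 = 0" using alpha by simp
    have H': "\<alpha> * (\<gamma>0 + \<alpha> / \<beta>^2) \<le> norm (0::'a) ^ 2 / 4" unfolding z by simp
    note R = proj_plus[OF nontriv b H']
    show ?thesis using R gz by simp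
  next
    case s
    define t where "t = - \<gamma>0 * \<beta>^2 / \<alpha>"
    have a2: "\<alpha>^2 > 0" using alpha by simp
    have b2: "\<beta>^2 > 0" using b by simp
    have "\<bar>\<alpha> * \<gamma>0\<bar> * \<beta>^2 < \<alpha>^2" using s b2 by (simp add: field_simps)
    hence "\<bar>\<alpha>\<bar> * (\<bar>\<gamma>0\<bar> * \<beta>^2) < \<bar>\<alpha>\<bar> * \<bar>\<alpha>\<bar>" by (simp add: abs_mult power2_eq_square mult.assoc)
    hence "\<bar>\<gamma>0\<bar> * \<beta>^2 < \<bar>\<alpha>\<bar>"
      using mult_less_cancel_left_pos[of "\<bar>\<alpha>\<bar>" "\<bar>\<gamma>0\<bar> * \<beta>^2" "\<bar>\<alpha>\<bar>"] alpha abs_mult_self_eq[of \<alpha>] by simp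
    hence ta: "\<bar>t\<bar> < 1" unfolding t_def using alpha by (simp add: abs_mult abs_divide field_simps)
    have st1: "(0::'a) = 0 + t *\<^sub>R 0" by simp
    have st3: "\<gamma>0 = 0 - t * \<alpha> / \<beta>^2" unfolding t_def using alpha b by (simp add: field_simps)
    have f: "inner (0::'a) 0 = \<alpha> * 0" by simp
    show ?thesis using proj_strict[OF b ta st1 st1 st3 f] .
  qed
qed

theorem mainTheorem2:
  fixes \<alpha> \<beta> \<gamma>0 :: real and x0 y0 :: "'a::{real_inner, complete_space}"
  assumes nontriv: "\<exists>z::'a. z \<noteq> 0"
    and alpha: "\<alpha> \<noteq> 0" and beta: "\<beta> > 0"
  shows
  \<comment> \<open>(i)\<close>
  "(x0 \<noteq> y0 \<and> x0 \<noteq> - y0 \<longrightarrow>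
      (\<exists>!t. t \<in> {-1<..<1} \<and> gfun \<alpha> \<beta> x0 y0 \<gamma>0 t = 0) \<and>
      (\<forall>t \<in> {-1<..<1}. gfun \<alpha> \<beta> x0 y0 \<gamma>0 t = 0 \<longrightarrow>
         proj \<beta> (Calpha \<alpha>) (x0, y0, \<gamma>0) =
           {((1 / (1 - t^2)) *\<^sub>R (x0 - t *\<^sub>R y0), (1 / (1 - t^2)) *\<^sub>R (y0 - t *\<^sub>R x0),
             \<gamma>0 + t * \<alpha> / \<beta>^2)}))
   \<and>
  \<comment> \<open>(ii)\<close>
   (y0 = - x0 \<and> x0 \<noteq> 0 \<longrightarrow>
      (\<alpha> * (\<gamma>0 - \<alpha> / \<beta>^2) < - (norm x0 ^ 2 / 4) \<longrightarrow>
         (\<exists>!t. t \<in> {-1<..<1} \<and> g1fun \<alpha> \<beta> x0 \<gamma>0 t = 0) \<and>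
         (\<forall>t \<in> {-1<..<1}. g1fun \<alpha> \<beta> x0 \<gamma>0 t = 0 \<longrightarrow>
            proj \<beta> (Calpha \<alpha>) (x0, - x0, \<gamma>0) =
              {((1 / (1 - t)) *\<^sub>R x0, (1 / (1 - t)) *\<^sub>R (- x0), \<gamma>0 + t * \<alpha> / \<beta>^2)})) \<and>
      (\<alpha> * (\<gamma>0 - \<alpha> / \<beta>^2) \<ge> - (norm x0 ^ 2 / 4) \<longrightarrow>
         proj \<beta> (Calpha \<alpha>) (x0, - x0, \<gamma>0) =
           {((1/2) *\<^sub>R x0 + (1 / sqrt 2) *\<^sub>R u, - ((1/2) *\<^sub>R x0) + (1 / sqrt 2) *\<^sub>R u, \<gamma>0 - \<alpha> / \<beta>^2)
             | u. norm u = sqrt (2 * \<alpha> * (\<gamma>0 - \<alpha> / \<beta>^2) + norm x0 ^ 2 / 2)} \<and>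
         ((\<exists>w. proj \<beta> (Calpha \<alpha>) (x0, - x0, \<gamma>0) = {w}) \<longleftrightarrow>
            \<alpha> * (\<gamma>0 - \<alpha> / \<beta>^2) = - (norm x0 ^ 2 / 4))))
   \<and>
  \<comment> \<open>(iii)\<close>
   (y0 = x0 \<and> x0 \<noteq> 0 \<longrightarrow>
      (\<alpha> * (\<gamma>0 + \<alpha> / \<beta>^2) > norm x0 ^ 2 / 4 \<longrightarrow>
         (\<exists>!t. t \<in> {-1<..<1} \<and> g2fun \<alpha> \<beta> x0 \<gamma>0 t = 0) \<and>
         (\<forall>t \<in> {-1<..<1}. g2fun \<alpha> \<beta> x0 \<gamma>0 t = 0 \<longrightarrow>
            proj \<beta> (Calpha \<alpha>) (x0, x0, \<gamma>0) =
              {((1 / (1 + t)) *\<^sub>R x0, (1 / (1 + t)) *\<^sub>R x0, \<gamma>0 + t * \<alpha> / \<beta>^2)})) \<and>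
      (\<alpha> * (\<gamma>0 + \<alpha> / \<beta>^2) \<le> norm x0 ^ 2 / 4 \<longrightarrow>
         proj \<beta> (Calpha \<alpha>) (x0, x0, \<gamma>0) =
           {((1/2) *\<^sub>R x0 - (1 / sqrt 2) *\<^sub>R v, (1/2) *\<^sub>R x0 + (1 / sqrt 2) *\<^sub>R v, \<gamma>0 + \<alpha> / \<beta>^2)
             | v. norm v = sqrt (- 2 * \<alpha> * (\<gamma>0 + \<alpha> / \<beta>^2) + norm x0 ^ 2 / 2)} \<and>
         ((\<exists>w. proj \<beta> (Calpha \<alpha>) (x0, x0, \<gamma>0) = {w}) \<longleftrightarrow>
            \<alpha> * (\<gamma>0 + \<alpha> / \<beta>^2) = norm x0 ^ 2 / 4)))
   \<and>
  \<comment> \<open>(iv)\<close>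
   (x0 = 0 \<and> y0 = 0 \<longrightarrow>
      (\<alpha> * \<gamma>0 > \<alpha>^2 / \<beta>^2 \<longrightarrow>
         proj \<beta> (Calpha \<alpha>) ((0::'a), (0::'a), \<gamma>0) =
           {((1 / sqrt 2) *\<^sub>R u, (1 / sqrt 2) *\<^sub>R u, \<gamma>0 - \<alpha> / \<beta>^2)
             | u. norm u = sqrt (2 * \<alpha> * (\<gamma>0 - \<alpha> / \<beta>^2))} \<and>
         \<not> (\<exists>w. proj \<beta> (Calpha \<alpha>) ((0::'a), (0::'a), \<gamma>0) = {w})) \<and>
      (\<bar>\<alpha> * \<gamma>0\<bar> \<le> \<alpha>^2 / \<beta>^2 \<longrightarrow>
         proj \<beta> (Calpha \<alpha>) ((0::'a), (0::'a), \<gamma>0) = {((0::'a), (0::'a), 0)}) \<and>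
      (\<alpha> * \<gamma>0 < - (\<alpha>^2 / \<beta>^2) \<longrightarrow>
         proj \<beta> (Calpha \<alpha>) ((0::'a), (0::'a), \<gamma>0) =
           {(- ((1 / sqrt 2) *\<^sub>R v), (1 / sqrt 2) *\<^sub>R v, \<gamma>0 + \<alpha> / \<beta>^2)
             | v. norm v = sqrt (- 2 * \<alpha> * (\<gamma>0 + \<alpha> / \<beta>^2))} \<and>
         \<not> (\<exists>w. proj \<beta> (Calpha \<alpha>) ((0::'a), (0::'a), \<gamma>0) = {w})))"
proof -
  note A = partI[OF alpha beta]
  note B = partII[OF nontriv alpha beta]
  note C = partIII[OF nontriv alpha beta]
  note D = partIV[OF nontriv alpha beta]
  show ?thesis
    apply (rule conjI, rule A)
    apply (rule conjI, rule B)
    apply (rule conjI, rule C)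
    apply (rule D)
    done
qed

end
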